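(* Let $n \ge 1$, let $F$ be an $n$-perturbation on $H^2(\mathbb{D})$ and $S_n = M_z + F$. If $f \in H^2(\mathbb{D})$ is a nonzero function, then the closed subspace $[f]_{S_n} = \overline{\{p(S_n) f : p \in \mathbb{C}[z]\}}$ contains a nonzero closed $M_z$-invariant subspace of $H^2(\mathbb{D})$.
   Context: $H^2(\mathbb{D})$ is the Hardy space on the open unit disc and $M_z$ the unilateral shift on it. All operators are bounded. A linear operator $F$ on $H^2(\mathbb{D})$ is an $n$-perturbation if (a) $Fz^m = 0$ for all $m \ge n$; (b) $F(z^m H^2(\mathbb{D})) \subseteq z^{m+1}\mathbb{C}[z]$ for all $m \ge 0$; and (c) $M_z + F$ is left-invertible. *)

theory Defs
  imports "HOL-Analysis.Analysis" "HOL-Computational_Algebra.Polynomial"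
begin

text \<open>The Hardy space H^2(D) is modelled through Taylor coefficients:
  f(z) = sum a_k z^k corresponds to the coefficient sequence a :: nat => complex,
  and f is in H^2 iff sum |a_k|^2 < infinity; the H^2 norm is the l^2 norm of a.\<close>

type_synonym seq = "nat \<Rightarrow> complex"
type_synonym op = "seq \<Rightarrow> seq"

definition H2 :: "seq set" where
  "H2 = {a. summable (\<lambda>k. (cmod (a k))\<^sup>2)}"

definition h2_norm :: "seq \<Rightarrow> real" where
  "h2_norm a = sqrt (\<Sum>k. (cmod (a k))\<^sup>2)"

definition sadd :: "seq \<Rightarrow> seq \<Rightarrow> seq" where
  "sadd a b = (\<lambda>k. a k + b k)"

definition ssub :: "seq \<Rightarrow> seq \<Rightarrow> seq" where
  "ssub a b = (\<lambda>k. a k - b k)"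

definition sscale :: "complex \<Rightarrow> seq \<Rightarrow> seq" where
  "sscale c a = (\<lambda>k. c * a k)"

definition bounded_op :: "op \<Rightarrow> bool" where
  "bounded_op T \<longleftrightarrow>
     (\<forall>a\<in>H2. T a \<in> H2) \<and>
     (\<forall>a\<in>H2. \<forall>b\<in>H2. T (sadd a b) = sadd (T a) (T b)) \<and>
     (\<forall>a\<in>H2. \<forall>c. T (sscale c a) = sscale c (T a)) \<and>
     (\<exists>K. \<forall>a\<in>H2. h2_norm (T a) \<le> K * h2_norm a)"

definition left_invertible :: "op \<Rightarrow> bool" where
  "left_invertible T \<longleftrightarrow> (\<exists>L. bounded_op L \<and> (\<forall>a\<in>H2. L (T a) = a))"

definition zpow :: "nat \<Rightarrow> seq" where
  "zpow m = (\<lambda>k. if k = m then 1 else 0)"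

definition Mz :: op where
  "Mz a = (\<lambda>k. if k = 0 then 0 else a (k - 1))"

definition op_add :: "op \<Rightarrow> op \<Rightarrow> op" where
  "op_add S T = (\<lambda>a. sadd (S a) (T a))"

definition zpowH2 :: "nat \<Rightarrow> seq set" where
  "zpowH2 m = {a \<in> H2. \<forall>k<m. a k = 0}"

definition zpow_poly :: "nat \<Rightarrow> seq set" where
  "zpow_poly m = {a. (\<exists>N. \<forall>k\<ge>N. a k = 0) \<and> (\<forall>k<m. a k = 0)}"

definition n_perturbation :: "nat \<Rightarrow> op \<Rightarrow> bool" where
  "n_perturbation n F \<longleftrightarrow>
     bounded_op F \<and>
     (\<forall>m\<ge>n. F (zpow m) = (\<lambda>_. 0)) \<and>
     (\<forall>m. F ` zpowH2 m \<subseteq> zpow_poly (Suc m)) \<and>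
     left_invertible (op_add Mz F)"

definition poly_op :: "complex poly \<Rightarrow> op \<Rightarrow> seq \<Rightarrow> seq" where
  "poly_op p T f = (\<lambda>k. \<Sum>i\<le>degree p. coeff p i * (T ^^ i) f k)"

definition h2_closure :: "seq set \<Rightarrow> seq set" where
  "h2_closure A = {a \<in> H2. \<forall>e>0. \<exists>b\<in>A. h2_norm (ssub a b) < e}"

definition cyclic_subspace :: "op \<Rightarrow> seq \<Rightarrow> seq set" where
  "cyclic_subspace T f = h2_closure {poly_op p T f | p. True}"

definition closed_subspace :: "seq set \<Rightarrow> bool" where
  "closed_subspace M \<longleftrightarrow> M \<subseteq> H2 \<and> (\<lambda>_. 0) \<in> M \<and>
     (\<forall>a\<in>M. \<forall>b\<in>M. sadd a b \<in> M) \<and> (\<forall>a\<in>M. \<forall>c. sscale c a \<in> M) \<and>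
     h2_closure M \<subseteq> M"

end

theory Submission
  imports Defs
begin

lemma H2_zero: "(\<lambda>_. 0) \<in> H2" by (simp add: H2_def)

lemma H2_bound: assumes "a \<in> H2" "\<And>k. cmod (b k) \<le> cmod (a k)" shows "b \<in> H2"
proof -
  have s: "summable (\<lambda>k. (cmod (a k))\<^sup>2)" using assms(1) by (simp add: H2_def)
  have b: "(cmod (b k))\<^sup>2 \<le> (cmod (a k))\<^sup>2" for k
    using assms(2)[of k] by (simp add: power_mono)
  have "summable (\<lambda>k. (cmod (b k))\<^sup>2)"
    by (rule summable_comparison_test'[OF s, where N=0]) (use b in auto)
  then show ?thesis unfolding H2_def by simp
qed

lemma H2_sadd: assumes "a \<in> H2" "b \<in> H2" shows "sadd a b \<in> H2"
proof -
  have s: "summable (\<lambda>k. 2*(cmod (a k))\<^sup>2 + 2*(cmod (b k))\<^sup>2)"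
    using assms by (auto simp: H2_def intro: summable_add summable_mult)
  have "norm ((cmod (a k + b k))\<^sup>2) \<le> 2*(cmod (a k))\<^sup>2 + 2*(cmod (b k))\<^sup>2" for k
  proof -
    have "cmod (a k + b k) \<le> cmod (a k) + cmod (b k)" by (rule norm_triangle_ineq)
    then have "(cmod (a k + b k))\<^sup>2 \<le> (cmod (a k) + cmod (b k))\<^sup>2" by (simp add: power_mono)
    also have "\<dots> \<le> 2*(cmod (a k))\<^sup>2 + 2*(cmod (b k))\<^sup>2"
      by (smt (verit) sum_squares_bound power2_sum)
    finally show ?thesis by simp
  qed
  then have "summable (\<lambda>k. (cmod (a k + b k))\<^sup>2)"
    by (intro summable_comparison_test'[OF s, where N=0]) auto
  then show ?thesis unfolding H2_def sadd_def by simp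
qed

lemma H2_sscale: assumes "a \<in> H2" shows "sscale c a \<in> H2"
proof -
  have "summable (\<lambda>k. (cmod c)\<^sup>2 * (cmod (a k))\<^sup>2)" using assms by (auto simp: H2_def intro: summable_mult)
  then show ?thesis unfolding H2_def sscale_def by (simp add: norm_mult power_mult_distrib)
qed

lemma ssub_eq: "ssub a b = sadd a (sscale (-1) b)"
  by (simp add: ssub_def sadd_def sscale_def)

lemma H2_ssub: assumes "a \<in> H2" "b \<in> H2" shows "ssub a b \<in> H2"
  using assms by (simp add: ssub_eq H2_sadd H2_sscale)

lemma h2_norm_nonneg: "a \<in> H2 \<Longrightarrow> h2_norm a \<ge> 0"
  unfolding h2_norm_def H2_def by (simp add: suminf_nonneg)

lemma h2_norm_zero_imp: assumes "a \<in> H2" "h2_norm a = 0" shows "a = (\<lambda>_. 0)"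
proof -
  have s: "summable (\<lambda>k. (cmod (a k))\<^sup>2)" using assms(1) by (simp add: H2_def)
  have "(\<Sum>k. (cmod (a k))\<^sup>2) = 0" using assms(2) unfolding h2_norm_def
    by (simp add: suminf_nonneg)
  then have "\<forall>k. (cmod (a k))\<^sup>2 = 0" using suminf_eq_zero_iff[OF s] by simp
  then show ?thesis by auto
qed

lemma partial_le_h2: assumes "a \<in> H2" shows "L2_set (\<lambda>k. cmod (a k)) {..<N} \<le> h2_norm a"
proof -
  have s: "summable (\<lambda>k. (cmod (a k))\<^sup>2)" using assms(1) by (simp add: H2_def)
  have "(\<Sum>k<N. (cmod (a k))\<^sup>2) \<le> (\<Sum>k. (cmod (a k))\<^sup>2)"
    by (rule sum_le_suminf[OF s]) auto
  then show ?thesis unfolding L2_set_def h2_norm_def by simp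
qed

lemma h2_norm_triangle: assumes "a \<in> H2" "b \<in> H2"
  shows "h2_norm (sadd a b) \<le> h2_norm a + h2_norm b"
proof -
  have s: "summable (\<lambda>k. (cmod (a k + b k))\<^sup>2)" using H2_sadd[OF assms] by (simp add: H2_def sadd_def)
  have "(\<Sum>k<N. (cmod (a k + b k))\<^sup>2) \<le> (h2_norm a + h2_norm b)\<^sup>2" for N
  proof -
    have "L2_set (\<lambda>k. cmod (a k + b k)) {..<N} \<le> L2_set (\<lambda>k. cmod (a k) + cmod (b k)) {..<N}"
      by (rule L2_set_mono) (auto simp: norm_triangle_ineq)
    also have "\<dots> \<le> L2_set (\<lambda>k. cmod (a k)) {..<N} + L2_set (\<lambda>k. cmod (b k)) {..<N}"
      by (rule L2_set_triangle_ineq)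
    also have "\<dots> \<le> h2_norm a + h2_norm b" using partial_le_h2[OF assms(1)] partial_le_h2[OF assms(2)]
      by (simp add: add_mono)
    finally have "L2_set (\<lambda>k. cmod (a k + b k)) {..<N} \<le> h2_norm a + h2_norm b" .
    then have "(L2_set (\<lambda>k. cmod (a k + b k)) {..<N})\<^sup>2 \<le> (h2_norm a + h2_norm b)\<^sup>2"
      by (simp add: power_mono L2_set_nonneg)
    then show ?thesis by (simp add: L2_set_def sum_nonneg)
  qed
  then have "(\<Sum>k. (cmod (a k + b k))\<^sup>2) \<le> (h2_norm a + h2_norm b)\<^sup>2"
    by (intro suminf_le_const[OF s]) auto
  then have "sqrt (\<Sum>k. (cmod (a k + b k))\<^sup>2) \<le> sqrt ((h2_norm a + h2_norm b)\<^sup>2)"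
    by (rule real_sqrt_le_mono)
  also have "\<dots> = h2_norm a + h2_norm b" using h2_norm_nonneg[OF assms(1)] h2_norm_nonneg[OF assms(2)] by simp
  finally show ?thesis by (simp add: h2_norm_def sadd_def)
qed

lemma h2_norm_sscale: assumes "a \<in> H2" shows "h2_norm (sscale c a) = cmod c * h2_norm a"
proof -
  have s: "summable (\<lambda>k. (cmod (a k))\<^sup>2)" using assms(1) by (simp add: H2_def)
  have "(\<Sum>k. (cmod (c * a k))\<^sup>2) = (cmod c)\<^sup>2 * (\<Sum>k. (cmod (a k))\<^sup>2)"
    using suminf_mult[OF s, of "(cmod c)\<^sup>2"] by (simp add: norm_mult power_mult_distrib)
  then show ?thesis unfolding h2_norm_def sscale_def by (simp add: real_sqrt_mult)
qed

lemma h2_norm_tri3: assumes "a \<in> H2" "b \<in> H2" "c \<in> H2"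
  shows "h2_norm (ssub a c) \<le> h2_norm (ssub a b) + h2_norm (ssub b c)"
proof -
  have "ssub a c = sadd (ssub a b) (ssub b c)" by (simp add: ssub_def sadd_def)
  then show ?thesis using h2_norm_triangle[OF H2_ssub[OF assms(1,2)] H2_ssub[OF assms(2,3)]] by simp
qed

lemma h2_norm_Mz: assumes "a \<in> H2" shows "Mz a \<in> H2" "h2_norm (Mz a) = h2_norm a"
proof -
  have s: "summable (\<lambda>k. (cmod (a k))\<^sup>2)" using assms(1) by (simp add: H2_def)
  let ?g = "\<lambda>k. (cmod (Mz a k))\<^sup>2"
  have e: "(\<lambda>k. ?g (Suc k)) = (\<lambda>k. (cmod (a k))\<^sup>2)" by (simp add: Mz_def)
  have s2: "summable ?g" using s e summable_Suc_iff[of ?g] by simp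
  then show "Mz a \<in> H2" by (simp add: H2_def)
  have "(\<Sum>k. ?g (Suc k)) = suminf ?g - ?g 0" by (rule suminf_split_head[OF s2])
  then show "h2_norm (Mz a) = h2_norm a" unfolding h2_norm_def using e by (simp add: Mz_def)
qed

lemma tail_norm: assumes "a \<in> H2"
  shows "(\<lambda>N. h2_norm (\<lambda>k. if k < N then 0 else a k)) \<longlonglongrightarrow> 0"
proof -
  have s: "summable (\<lambda>k. (cmod (a k))\<^sup>2)" using assms(1) by (simp add: H2_def)
  have eq: "h2_norm (\<lambda>k. if k < N then 0 else a k) = sqrt (\<Sum>k. (cmod (a (k + N)))\<^sup>2)" for N
  proof -
    let ?y = "\<lambda>k. if k < N then 0 else (cmod (a k))\<^sup>2"
    have sy: "summable ?y" by (rule summable_comparison_test[OF _ s]) auto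
    have "suminf ?y = (\<Sum>k. ?y (k + N)) + (\<Sum>i<N. ?y i)" by (rule suminf_split_initial_segment[OF sy])
    then have "suminf ?y = (\<Sum>k. (cmod (a (k + N)))\<^sup>2)" by simp
    moreover have "(\<lambda>k. (cmod (if k < N then 0 else a k))\<^sup>2) = ?y" by auto
    ultimately show ?thesis unfolding h2_norm_def by simp
  qed
  have "(\<lambda>N. \<Sum>k. (cmod (a (k + N)))\<^sup>2) \<longlonglongrightarrow> 0" by (rule suminf_exist_split2[OF s])
  then have "(\<lambda>N. sqrt (\<Sum>k. (cmod (a (k + N)))\<^sup>2)) \<longlonglongrightarrow> sqrt 0" by (rule tendsto_real_sqrt)
  then show ?thesis by (simp add: eq)
qed


lemma h2_norm_0: "h2_norm (\<lambda>_. 0) = 0" by (simp add: h2_norm_def)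

lemma closE: "a \<in> h2_closure A \<Longrightarrow> e > 0 \<Longrightarrow> \<exists>b\<in>A. h2_norm (ssub a b) < e"
  unfolding h2_closure_def by blast

lemma closH: "a \<in> h2_closure A \<Longrightarrow> a \<in> H2"
  unfolding h2_closure_def by blast

lemma closI: "a \<in> H2 \<Longrightarrow> (\<And>e. e > 0 \<Longrightarrow> \<exists>b\<in>A. h2_norm (ssub a b) < e) \<Longrightarrow> a \<in> h2_closure A"
  unfolding h2_closure_def by blast

lemma clos_sub: "h2_closure A \<subseteq> H2" using closH by blast

lemma clos_incl: assumes "A \<subseteq> H2" shows "A \<subseteq> h2_closure A"
proof
  fix a assume a: "a \<in> A"
  have z: "h2_norm (ssub a a) = 0" by (simp add: ssub_def h2_norm_0)
  show "a \<in> h2_closure A"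
  proof (rule closI)
    show "a \<in> H2" using a assms by blast
    fix e :: real assume "e > 0"
    then show "\<exists>b\<in>A. h2_norm (ssub a b) < e" using a z by (intro bexI[of _ a]) auto
  qed
qed

lemma clos_mono: "A \<subseteq> B \<Longrightarrow> h2_closure A \<subseteq> h2_closure B"
  unfolding h2_closure_def by blast

lemma clos_idem: assumes "A \<subseteq> H2" shows "h2_closure (h2_closure A) \<subseteq> h2_closure A"
proof
  fix a assume a: "a \<in> h2_closure (h2_closure A)"
  then have aH: "a \<in> H2" by (rule closH)
  show "a \<in> h2_closure A"
  proof (rule closI[OF aH])
    fix e :: real assume e: "e > 0"
    then have e2: "e/2 > 0" by simp
    obtain b where b: "b \<in> h2_closure A" "h2_norm (ssub a b) < e/2"
      using closE[OF a e2] by blast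
    obtain c where c: "c \<in> A" "h2_norm (ssub b c) < e/2"
      using closE[OF b(1) e2] by blast
    have bH: "b \<in> H2" using b(1) by (rule closH)
    have cH: "c \<in> H2" using c(1) assms by blast
    have "h2_norm (ssub a c) \<le> h2_norm (ssub a b) + h2_norm (ssub b c)"
      by (rule h2_norm_tri3[OF aH bH cH])
    then have "h2_norm (ssub a c) < e" using b(2) c(2) by linarith
    then show "\<exists>c\<in>A. h2_norm (ssub a c) < e" using c(1) by blast
  qed
qed

lemma clos_add: assumes "A \<subseteq> H2" "\<forall>a\<in>A. \<forall>b\<in>A. sadd a b \<in> A"
  and a: "a \<in> h2_closure A" and b: "b \<in> h2_closure A"
  shows "sadd a b \<in> h2_closure A"
proof -
  have aH: "a \<in> H2" using a by (rule closH)
  have bH: "b \<in> H2" using b by (rule closH)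
  show ?thesis
  proof (rule closI[OF H2_sadd[OF aH bH]])
    fix e :: real assume e: "e > 0"
    then have e2: "e/2 > 0" by simp
    obtain a' where a': "a' \<in> A" "h2_norm (ssub a a') < e/2"
      using closE[OF a e2] by blast
    obtain b' where b': "b' \<in> A" "h2_norm (ssub b b') < e/2"
      using closE[OF b e2] by blast
    have a'H: "a' \<in> H2" using a'(1) assms(1) by blast
    have b'H: "b' \<in> H2" using b'(1) assms(1) by blast
    have eq: "ssub (sadd a b) (sadd a' b') = sadd (ssub a a') (ssub b b')"
      by (auto simp: ssub_def sadd_def)
    have "h2_norm (ssub (sadd a b) (sadd a' b')) \<le> h2_norm (ssub a a') + h2_norm (ssub b b')"
      unfolding eq by (rule h2_norm_triangle[OF H2_ssub[OF aH a'H] H2_ssub[OF bH b'H]])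
    then have "h2_norm (ssub (sadd a b) (sadd a' b')) < e" using a'(2) b'(2) by linarith
    moreover have "sadd a' b' \<in> A" using assms(2) a'(1) b'(1) by blast
    ultimately show "\<exists>c\<in>A. h2_norm (ssub (sadd a b) c) < e" by blast
  qed
qed

lemma clos_scale: assumes "A \<subseteq> H2" "\<forall>a\<in>A. \<forall>c. sscale c a \<in> A"
  and a: "a \<in> h2_closure A"
  shows "sscale c a \<in> h2_closure A"
proof -
  have aH: "a \<in> H2" using a by (rule closH)
  show ?thesis
  proof (rule closI[OF H2_sscale[OF aH]])
    fix e :: real assume e: "e > 0"
    have cp: "cmod c + 1 > 0" by (smt (verit) norm_ge_zero)
    have ce: "e / (cmod c + 1) > 0" by (rule divide_pos_pos[OF e cp])
    obtain a' where a': "a' \<in> A" "h2_norm (ssub a a') < e / (cmod c + 1)"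
      using closE[OF a ce] by blast
    have eq: "ssub (sscale c a) (sscale c a') = sscale c (ssub a a')"
      by (auto simp: ssub_def sscale_def algebra_simps)
    have aH': "a' \<in> H2" using a'(1) assms(1) by blast
    have "h2_norm (ssub (sscale c a) (sscale c a')) = cmod c * h2_norm (ssub a a')"
      unfolding eq by (rule h2_norm_sscale[OF H2_ssub[OF aH aH']])
    also have "\<dots> \<le> (cmod c + 1) * h2_norm (ssub a a')"
      using h2_norm_nonneg[OF H2_ssub[OF aH aH']] by (simp add: mult_right_mono)
    also have "\<dots> < (cmod c + 1) * (e / (cmod c + 1))"
      by (rule mult_strict_left_mono[OF a'(2) cp])
    also have "\<dots> = e" using cp by simp
    finally have "h2_norm (ssub (sscale c a) (sscale c a')) < e" .
    moreover have "sscale c a' \<in> A" using assms(2) a'(1) by blast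
    ultimately show "\<exists>b\<in>A. h2_norm (ssub (sscale c a) b) < e" by blast
  qed
qed

lemma clos_Mz: assumes "A \<subseteq> H2" "Mz ` A \<subseteq> A"
  shows "Mz ` h2_closure A \<subseteq> h2_closure A"
proof
  fix x assume "x \<in> Mz ` h2_closure A"
  then obtain a where a: "a \<in> h2_closure A" and x: "x = Mz a" by blast
  have aH: "a \<in> H2" using a by (rule closH)
  show "x \<in> h2_closure A" unfolding x
  proof (rule closI[OF h2_norm_Mz(1)[OF aH]])
    fix e :: real assume e: "e > 0"
    obtain a' where a': "a' \<in> A" "h2_norm (ssub a a') < e"
      using closE[OF a e] by blast
    have aH': "a' \<in> H2" using a'(1) assms(1) by blast
    have eq: "ssub (Mz a) (Mz a') = Mz (ssub a a')" by (auto simp: ssub_def Mz_def)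
    have "h2_norm (ssub (Mz a) (Mz a')) = h2_norm (ssub a a')"
      unfolding eq by (rule h2_norm_Mz(2)[OF H2_ssub[OF aH aH']])
    then have "h2_norm (ssub (Mz a) (Mz a')) < e" using a'(2) by simp
    moreover have "Mz a' \<in> A" using assms(2) a'(1) by blast
    ultimately show "\<exists>b\<in>A. h2_norm (ssub (Mz a) b) < e" by blast
  qed
qed

lemma closed_subspace_clos:
  assumes "A \<subseteq> H2" "(\<lambda>_. 0) \<in> A" "\<forall>a\<in>A. \<forall>b\<in>A. sadd a b \<in> A" "\<forall>a\<in>A. \<forall>c. sscale c a \<in> A"
  shows "closed_subspace (h2_closure A)"
  unfolding closed_subspace_def
proof (intro conjI ballI allI)
  show "h2_closure A \<subseteq> H2" by (rule clos_sub)
  show "(\<lambda>_. 0) \<in> h2_closure A" using clos_incl[OF assms(1)] assms(2) by blast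
  show "sadd a b \<in> h2_closure A" if "a \<in> h2_closure A" "b \<in> h2_closure A" for a b
    by (rule clos_add[OF assms(1,3) that])
  show "sscale c a \<in> h2_closure A" if "a \<in> h2_closure A" for a c
    by (rule clos_scale[OF assms(1,4) that])
  show "h2_closure (h2_closure A) \<subseteq> h2_closure A" by (rule clos_idem[OF assms(1)])
qed


lemma zpow_H2: "zpow m \<in> H2"
proof -
  have "(\<lambda>k. (cmod (zpow m k))\<^sup>2) = (\<lambda>k. if k = m then 1 else 0)" by (auto simp: zpow_def)
  moreover have "summable (\<lambda>k::nat. if k = m then (1::real) else 0)"
    using sums_single[of m "\<lambda>_. (1::real)"] by (auto simp: summable_def)
  ultimately show ?thesis by (simp add: H2_def)
qed

lemma bo_zero: assumes "bounded_op F" shows "F (\<lambda>_. 0) = (\<lambda>_. 0)"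
proof -
  have "sscale 0 (\<lambda>_. 0) = (\<lambda>_. 0)" by (simp add: sscale_def)
  moreover have "F (sscale 0 (\<lambda>_. 0)) = sscale 0 (F (\<lambda>_. 0))"
    using assms H2_zero unfolding bounded_op_def by blast
  ultimately show ?thesis by (simp add: sscale_def)
qed

lemma F_kill:
  assumes bo: "bounded_op F" and z: "\<forall>m\<ge>n. F (zpow m) = (\<lambda>_. 0)"
    and gH: "g \<in> H2" and g0: "\<forall>k<n. g k = 0"
  shows "F g = (\<lambda>_. 0)"
proof -
  have add: "\<And>a b. a \<in> H2 \<Longrightarrow> b \<in> H2 \<Longrightarrow> F (sadd a b) = sadd (F a) (F b)"
    and scl: "\<And>a c. a \<in> H2 \<Longrightarrow> F (sscale c a) = sscale c (F a)"
    and FH: "\<And>a. a \<in> H2 \<Longrightarrow> F a \<in> H2"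
    using bo unfolding bounded_op_def by blast+
  obtain K where K: "\<And>a. a \<in> H2 \<Longrightarrow> h2_norm (F a) \<le> K * h2_norm a"
    using bo unfolding bounded_op_def by blast
  define t where "t N = (\<lambda>k. if k < N then g k else 0)" for N
  define r where "r N = (\<lambda>k. if k < N then 0 else g k)" for N
  have tH: "t N \<in> H2" for N by (rule H2_bound[OF gH]) (auto simp: t_def)
  have rH: "r N \<in> H2" for N by (rule H2_bound[OF gH]) (auto simp: r_def)
  have Ft: "F (t N) = (\<lambda>_. 0)" if "N \<ge> n" for N
    using that
  proof (induction N rule: dec_induct)
    case base
    have "t n = (\<lambda>_. 0)" using g0 by (auto simp: t_def)
    then show ?case using bo_zero[OF bo] by simp
  next
    case (step N)
    have eq: "t (Suc N) = sadd (t N) (sscale (g N) (zpow N))"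
      by (rule ext) (auto simp: t_def sadd_def sscale_def zpow_def less_Suc_eq)
    have "F (t (Suc N)) = sadd (F (t N)) (sscale (g N) (F (zpow N)))"
      unfolding eq by (simp add: add[OF tH H2_sscale[OF zpow_H2]] scl[OF zpow_H2])
    also have "\<dots> = (\<lambda>_. 0)" using step z by (simp add: sadd_def sscale_def)
    finally show ?case .
  qed
  have gs: "g = sadd (t N) (r N)" for N by (auto simp: t_def r_def sadd_def)
  have Fr: "F g = F (r N)" if "N \<ge> n" for N
  proof -
    have "F g = sadd (F (t N)) (F (r N))" by (subst gs[of N]) (rule add[OF tH rH])
    then show ?thesis using Ft[OF that] by (simp add: sadd_def)
  qed
  have lim: "(\<lambda>N. K * h2_norm (r N)) \<longlonglongrightarrow> 0"
    using tendsto_mult_right_zero[OF tail_norm[OF gH], of K] by (simp add: r_def)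
  have "h2_norm (F g) \<le> 0"
  proof (rule LIMSEQ_le_const[OF lim])
    show "\<exists>N. \<forall>m\<ge>N. h2_norm (F g) \<le> K * h2_norm (r m)"
      using Fr K[OF rH] by (intro exI[of _ n]) auto
  qed
  moreover have "h2_norm (F g) \<ge> 0" by (rule h2_norm_nonneg[OF FH[OF gH]])
  ultimately have "h2_norm (F g) = 0" by simp
  then show ?thesis by (rule h2_norm_zero_imp[OF FH[OF gH]])
qed


lemma poly_op_N: "degree p \<le> N \<Longrightarrow> poly_op p T f k = (\<Sum>i\<le>N. coeff p i * (T ^^ i) f k)"
  unfolding poly_op_def
  by (rule sum.mono_neutral_left) (auto simp: coeff_eq_0)

lemma H2_sum: assumes "\<And>i. h i \<in> H2" shows "(\<lambda>k. \<Sum>i\<le>(N::nat). c i * h i k) \<in> H2"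
proof (induction N)
  case 0
  then show ?case using H2_sscale[OF assms[of 0], of "c 0"] by (simp add: sscale_def)
next
  case (Suc N)
  have "(\<lambda>k. \<Sum>i\<le>Suc N. c i * h i k) = sadd (\<lambda>k. \<Sum>i\<le>N. c i * h i k) (sscale (c (Suc N)) (h (Suc N)))"
    by (simp add: sadd_def sscale_def)
  then show ?case using H2_sadd[OF Suc H2_sscale[OF assms]] by simp
qed

lemma Mz_iter_H2: "g \<in> H2 \<Longrightarrow> (Mz ^^ i) g \<in> H2"
  by (induction i) (auto intro: h2_norm_Mz(1))

lemma poly_op_H2: "g \<in> H2 \<Longrightarrow> poly_op p Mz g \<in> H2"
  unfolding poly_op_def by (rule H2_sum) (rule Mz_iter_H2)

lemma poly_op_add: "sadd (poly_op p T f) (poly_op q T f) = poly_op (p + q) T f"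
proof (rule ext)
  fix k
  let ?N = "max (degree p) (degree q)"
  have "poly_op p T f k = (\<Sum>i\<le>?N. coeff p i * (T ^^ i) f k)" by (rule poly_op_N) simp
  moreover have "poly_op q T f k = (\<Sum>i\<le>?N. coeff q i * (T ^^ i) f k)" by (rule poly_op_N) simp
  moreover have "poly_op (p + q) T f k = (\<Sum>i\<le>?N. coeff (p + q) i * (T ^^ i) f k)"
    by (rule poly_op_N) (rule degree_add_le_max)
  ultimately show "sadd (poly_op p T f) (poly_op q T f) k = poly_op (p + q) T f k"
    by (simp add: sadd_def sum.distrib distrib_right)
qed

lemma poly_op_smult: "sscale c (poly_op p T f) = poly_op (smult c p) T f"
proof (rule ext)
  fix k
  have "poly_op (smult c p) T f k = (\<Sum>i\<le>degree p. coeff (smult c p) i * (T ^^ i) f k)"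
    by (rule poly_op_N) (rule degree_smult_le)
  then show "sscale c (poly_op p T f) k = poly_op (smult c p) T f k"
    by (simp add: sscale_def poly_op_def sum_distrib_left mult.assoc)
qed

lemma poly_op_zero: "poly_op 0 T f = (\<lambda>_. 0)" by (simp add: poly_op_def)

lemma poly_op_one: "poly_op 1 T f = f" by (simp add: poly_op_def)

lemma poly_op_Mz: "Mz (poly_op p Mz g) = poly_op (pCons 0 p) Mz g"
proof (rule ext)
  fix k
  have "poly_op (pCons 0 p) Mz g k = (\<Sum>i\<le>Suc (degree p). coeff (pCons 0 p) i * (Mz ^^ i) g k)"
    by (rule poly_op_N) (rule degree_pCons_le)
  also have "\<dots> = (\<Sum>i\<le>degree p. coeff p i * (Mz ^^ Suc i) g k)"
    unfolding sum.atMost_Suc_shift by simp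
  finally have e: "poly_op (pCons 0 p) Mz g k = (\<Sum>i\<le>degree p. coeff p i * (Mz ^^ Suc i) g k)" .
  show "Mz (poly_op p Mz g) k = poly_op (pCons 0 p) Mz g k"
    unfolding e by (cases k) (simp_all add: Mz_def poly_op_def)
qed

lemma shift_sum: "(\<Sum>i\<le>(d::nat) + n. (if n \<le> i then h (i - n) else 0)) = (\<Sum>i\<le>d. h i :: complex)"
proof (induction d)
  case 0
  have "(\<Sum>i\<le>n. (if n \<le> i then h (i - n) else 0)) = (\<Sum>i\<le>n. (if i = n then h 0 else 0))"
    by (rule sum.cong) auto
  then show ?case by simp
next
  case (Suc d)
  then show ?case by simp
qed

lemma poly_op_monom: "poly_op p T ((T ^^ n) f) = poly_op (monom 1 n * p) T f"
proof (rule ext)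
  fix k
  have deg: "degree (monom 1 n * p) \<le> degree p + n"
    using degree_mult_le[of "monom (1::complex) n" p] degree_monom_le[of "1::complex" n] by simp
  have "poly_op (monom 1 n * p) T f k = (\<Sum>i\<le>degree p + n. coeff (monom 1 n * p) i * (T ^^ i) f k)"
    by (rule poly_op_N[OF deg])
  also have "\<dots> = (\<Sum>i\<le>degree p + n. (if n \<le> i then coeff p (i - n) * (T ^^ (i - n + n)) f k else 0))"
    by (rule sum.cong) (auto simp: coeff_monom_mult)
  also have "\<dots> = (\<Sum>i\<le>degree p. coeff p i * (T ^^ (i + n)) f k)"
    by (rule shift_sum)
  also have "\<dots> = poly_op p T ((T ^^ n) f) k"
    by (simp add: poly_op_def funpow_add)
  finally show "poly_op p T ((T ^^ n) f) k = poly_op (monom 1 n * p) T f k" by simp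
qed


theorem lemma2p4:
  fixes n :: nat and F :: op and f :: seq
  assumes "n \<ge> 1"
    and "n_perturbation n F"
    and "f \<in> H2" and "f \<noteq> (\<lambda>_. 0)"
  shows "\<exists>M. closed_subspace M \<and> Mz ` M \<subseteq> M \<and> M \<noteq> {\<lambda>_. 0} \<and>
             M \<subseteq> cyclic_subspace (op_add Mz F) f"
proof -
  define S where "S = op_add Mz F"
  have bo: "bounded_op F" and z: "\<forall>m\<ge>n. F (zpow m) = (\<lambda>_. 0)"
    and tri: "\<forall>m. F ` zpowH2 m \<subseteq> zpow_poly (Suc m)" and li: "left_invertible S"
    using assms(2) unfolding n_perturbation_def S_def by blast+
  have FH: "\<And>a. a \<in> H2 \<Longrightarrow> F a \<in> H2" using bo unfolding bounded_op_def by blast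
  have SH: "S a \<in> H2" if "a \<in> H2" for a
    unfolding S_def op_add_def by (rule H2_sadd[OF h2_norm_Mz(1)[OF that] FH[OF that]])
  have Sz: "S a \<in> zpowH2 (Suc m)" if "a \<in> zpowH2 m" for a m
  proof -
    have aH: "a \<in> H2" and a0: "\<forall>k<m. a k = 0" using that by (auto simp: zpowH2_def)
    have "F a \<in> zpow_poly (Suc m)" using tri that by blast
    then have "\<forall>k<Suc m. F a k = 0" by (simp add: zpow_poly_def)
    moreover have "\<forall>k<Suc m. Mz a k = 0" using a0 by (auto simp: Mz_def)
    ultimately show ?thesis using SH[OF aH] by (auto simp: zpowH2_def S_def op_add_def sadd_def)
  qed
  have Siter: "(S ^^ j) f \<in> zpowH2 j" for j
  proof (induction j)
    case 0 then show ?case using assms(3) by (simp add: zpowH2_def)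
  next
    case (Suc j) then show ?case using Sz by simp
  qed
  have S0: "S (\<lambda>_. 0) = (\<lambda>_. 0)"
    by (simp add: S_def op_add_def sadd_def bo_zero[OF bo] Mz_def)
  obtain L where L: "\<And>a. a \<in> H2 \<Longrightarrow> L (S a) = a" using li unfolding left_invertible_def by blast
  have Sinj: "a = (\<lambda>_. 0)" if "a \<in> H2" "S a = (\<lambda>_. 0)" for a
    using L[OF that(1)] L[OF H2_zero] that(2) S0 by simp
  have Snz: "(S ^^ j) f \<noteq> (\<lambda>_. 0)" for j
  proof (induction j)
    case 0 then show ?case using assms(4) by simp
  next
    case (Suc j)
    have "(S ^^ j) f \<in> H2" using Siter[of j] by (simp add: zpowH2_def)
    then show ?case using Suc Sinj by auto
  qed
  define g where "g = (S ^^ n) f"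
  have gz: "g \<in> zpowH2 n" using Siter g_def by simp
  have gH: "g \<in> H2" using gz by (simp add: zpowH2_def)
  have gnz: "g \<noteq> (\<lambda>_. 0)" using Snz g_def by simp
  have SMz: "S a = Mz a" if "a \<in> zpowH2 n" for a
  proof -
    have "F a = (\<lambda>_. 0)" using F_kill[OF bo z] that by (simp add: zpowH2_def)
    then show ?thesis by (simp add: S_def op_add_def sadd_def)
  qed
  have Mzz: "Mz a \<in> zpowH2 n" if "a \<in> zpowH2 n" for a
    using that h2_norm_Mz(1) by (auto simp: zpowH2_def Mz_def)
  have iterEq: "(S ^^ j) g = (Mz ^^ j) g \<and> (Mz ^^ j) g \<in> zpowH2 n" for j
  proof (induction j)
    case 0 then show ?case using gz by simp
  next
    case (Suc j) then show ?case using SMz Mzz by simp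
  qed
  have pe: "poly_op p Mz g = poly_op p S g" for p
    unfolding poly_op_def using iterEq by simp
  define A where "A = {poly_op p Mz g | p. True}"
  have AH: "A \<subseteq> H2" unfolding A_def using poly_op_H2[OF gH] by blast
  have A0: "(\<lambda>_. 0) \<in> A"
  proof -
    have "(\<lambda>_. 0) = poly_op 0 Mz g" by (simp add: poly_op_zero)
    then show ?thesis unfolding A_def by blast
  qed
  have Aadd: "\<forall>a\<in>A. \<forall>b\<in>A. sadd a b \<in> A"
  proof (intro ballI)
    fix a b assume "a \<in> A" "b \<in> A"
    then obtain p q where "a = poly_op p Mz g" "b = poly_op q Mz g" unfolding A_def by blast
    then have "sadd a b = poly_op (p + q) Mz g" by (simp add: poly_op_add)
    then show "sadd a b \<in> A" unfolding A_def by blast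
  qed
  have Ascl: "\<forall>a\<in>A. \<forall>c. sscale c a \<in> A"
  proof (intro ballI allI)
    fix a c assume "a \<in> A"
    then obtain p where "a = poly_op p Mz g" unfolding A_def by blast
    then have "sscale c a = poly_op (smult c p) Mz g" by (simp add: poly_op_smult)
    then show "sscale c a \<in> A" unfolding A_def by blast
  qed
  have AMz: "Mz ` A \<subseteq> A"
  proof
    fix x assume "x \<in> Mz ` A"
    then obtain p where "x = Mz (poly_op p Mz g)" unfolding A_def by blast
    then have "x = poly_op (pCons 0 p) Mz g" by (simp add: poly_op_Mz)
    then show "x \<in> A" unfolding A_def by blast
  qed
  have gA: "g \<in> A"
  proof -
    have "g = poly_op 1 Mz g" by (simp add: poly_op_one)
    then show ?thesis unfolding A_def by blast
  qed
  have Acyc: "A \<subseteq> {poly_op p S f | p. True}"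
  proof
    fix x assume "x \<in> A"
    then obtain p where "x = poly_op p Mz g" unfolding A_def by blast
    also have "\<dots> = poly_op p S g" by (rule pe)
    also have "\<dots> = poly_op (monom 1 n * p) S f" unfolding g_def by (rule poly_op_monom)
    finally show "x \<in> {poly_op p S f | p. True}" by blast
  qed
  define M where "M = h2_closure A"
  have "closed_subspace M" unfolding M_def by (rule closed_subspace_clos[OF AH A0 Aadd Ascl])
  moreover have "Mz ` M \<subseteq> M" unfolding M_def by (rule clos_Mz[OF AH AMz])
  moreover have "M \<noteq> {\<lambda>_. 0}" using clos_incl[OF AH] gA gnz unfolding M_def by blast
  moreover have "M \<subseteq> cyclic_subspace (op_add Mz F) f"
    unfolding M_def cyclic_subspace_def S_def[symmetric] by (rule clos_mono[OF Acyc])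
  ultimately show ?thesis by blast
qed


end
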